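(* Let $(\mathfrak g,J)$ be a real Lie algebra with integrable complex structure and let $\rho:\mathfrak g\to\operatorname{End}E$ be an integrable representation on a real vector space $E$ with complex structure $I$. Then the bilinear map \[\delta:\mathfrak g^{0,1}\times E^{1,0}\to E^{1,0},\qquad(\bar X,V)\mapsto(\rho(\bar X)V)^{1,0},\] where $(\cdot)^{1,0}$ denotes the projection $E_{\mathbb C}\to E^{1,0}$ along $E^{0,1}$, is a $\mathbb C$-linear representation of the complex Lie algebra $\mathfrak g^{0,1}$ on $E^{1,0}$.
   Context: A complex structure on a real Lie algebra $\mathfrak g$ is $J$ with $J^2=-\mathrm{id}$ satisfying $[x,y]-[Jx,Jy]+J[Jx,y]+J[x,Jy]=0$. $\mathfrak g_{\mathbb C}=\mathfrak g^{1,0}\oplus\mathfrak g^{0,1}$ and $E_{\mathbb C}=E^{1,0}\oplus E^{0,1}$ are the $\pm i$-eigenspace decompositions of $J$ and $I$; $\rho$ is extended $\mathbb C$-linearly. The representation $\rho$ is called integrable if $[I,\rho(Jx)]+I[\rho(x),I]=0$ for all $x\in\mathfrak g$. *)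

theory Defs
  imports Complex_Main
begin

definition rlin :: "('a::real_vector \<Rightarrow> 'b::real_vector) \<Rightarrow> bool" where
  "rlin f \<longleftrightarrow> (\<forall>x y. f (x + y) = f x + f y) \<and> (\<forall>c x. f (c *\<^sub>R x) = c *\<^sub>R f x)"

definition lie_algebra :: "('g::real_vector \<Rightarrow> 'g \<Rightarrow> 'g) \<Rightarrow> bool" where
  "lie_algebra br \<longleftrightarrow> (\<forall>x. rlin (br x)) \<and> (\<forall>y. rlin (\<lambda>x. br x y)) \<and> (\<forall>x. br x x = 0)
     \<and> (\<forall>x y z. br x (br y z) + br y (br z x) + br z (br x y) = 0)"

(* Complex structure on the Lie algebra (integrable: vanishing Nijenhuis tensor). *)
definition lie_complex_structure :: "('g::real_vector \<Rightarrow> 'g \<Rightarrow> 'g) \<Rightarrow> ('g \<Rightarrow> 'g) \<Rightarrow> bool" where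
  "lie_complex_structure br J \<longleftrightarrow> rlin J \<and> (\<forall>x. J (J x) = - x)
     \<and> (\<forall>x y. br x y - br (J x) (J y) + J (br (J x) y) + J (br x (J y)) = 0)"

definition vs_complex_structure :: "('e::real_vector \<Rightarrow> 'e) \<Rightarrow> bool" where
  "vs_complex_structure I \<longleftrightarrow> rlin I \<and> (\<forall>v. I (I v) = - v)"

definition comm :: "('e \<Rightarrow> 'e::ab_group_add) \<Rightarrow> ('e \<Rightarrow> 'e) \<Rightarrow> 'e \<Rightarrow> 'e" where
  "comm A B = (\<lambda>v. A (B v) - B (A v))"

definition representation ::
  "('g::real_vector \<Rightarrow> 'g \<Rightarrow> 'g) \<Rightarrow> ('g \<Rightarrow> 'e::real_vector \<Rightarrow> 'e) \<Rightarrow> bool" where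
  "representation br \<rho> \<longleftrightarrow> (\<forall>v. rlin (\<lambda>x. \<rho> x v)) \<and> (\<forall>x. rlin (\<rho> x))
     \<and> (\<forall>x y. \<rho> (br x y) = comm (\<rho> x) (\<rho> y))"

definition integrable_rep :: "('g \<Rightarrow> 'g) \<Rightarrow> ('g \<Rightarrow> 'e::real_vector \<Rightarrow> 'e) \<Rightarrow> ('e \<Rightarrow> 'e) \<Rightarrow> bool" where
  "integrable_rep J \<rho> I \<longleftrightarrow> (\<forall>x v. comm I (\<rho> (J x)) v + I (comm (\<rho> x) I v) = 0)"

(* Complexification V_C = V + iV, an element (a,b) standing for a + i b. *)
type_synonym 'a cpx = "'a \<times> 'a"

definition cadd :: "'a::real_vector cpx \<Rightarrow> 'a cpx \<Rightarrow> 'a cpx" where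
  "cadd X Y = (fst X + fst Y, snd X + snd Y)"

definition csub :: "'a::real_vector cpx \<Rightarrow> 'a cpx \<Rightarrow> 'a cpx" where
  "csub X Y = (fst X - fst Y, snd X - snd Y)"

(* complex scalar multiplication: (x + i y)(a + i b) = (x a - y b) + i (x b + y a) *)
definition cscale :: "complex \<Rightarrow> 'a::real_vector cpx \<Rightarrow> 'a cpx" where
  "cscale c X = (Re c *\<^sub>R fst X - Im c *\<^sub>R snd X, Re c *\<^sub>R snd X + Im c *\<^sub>R fst X)"

definition cext :: "('a \<Rightarrow> 'b) \<Rightarrow> 'a cpx \<Rightarrow> 'b cpx" where
  "cext f X = (f (fst X), f (snd X))"

definition cbr :: "('g::real_vector \<Rightarrow> 'g \<Rightarrow> 'g) \<Rightarrow> 'g cpx \<Rightarrow> 'g cpx \<Rightarrow> 'g cpx" where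
  "cbr br X Y = (br (fst X) (fst Y) - br (snd X) (snd Y), br (fst X) (snd Y) + br (snd X) (fst Y))"

definition crho :: "('g \<Rightarrow> 'e::real_vector \<Rightarrow> 'e) \<Rightarrow> 'g cpx \<Rightarrow> 'e cpx \<Rightarrow> 'e cpx" where
  "crho \<rho> X W = (\<rho> (fst X) (fst W) - \<rho> (snd X) (snd W), \<rho> (fst X) (snd W) + \<rho> (snd X) (fst W))"

definition hol :: "('a::real_vector \<Rightarrow> 'a) \<Rightarrow> 'a cpx set" where
  "hol J = {X. cext J X = cscale \<i> X}"

definition antihol :: "('a::real_vector \<Rightarrow> 'a) \<Rightarrow> 'a cpx set" where
  "antihol J = {X. cext J X = cscale (- \<i>) X}"

definition proj10 :: "('a::real_vector \<Rightarrow> 'a) \<Rightarrow> 'a cpx \<Rightarrow> 'a cpx" where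
  "proj10 I W = (THE P. P \<in> hol I \<and> csub W P \<in> antihol I)"

end

theory Submission
  imports Defs
begin

lemma rlin_simps:
  assumes "rlin f"
  shows "f (x+y) = f x + f y" and "f (c *\<^sub>R x) = c *\<^sub>R f x" and "f 0 = 0"
    and "f (-x) = - f x" and "f (x - y) = f x - f y"
proof -
  have a: "\<And>x y. f (x+y) = f x + f y" and s: "\<And>c x. f (c *\<^sub>R x) = c *\<^sub>R f x"
    using assms unfolding rlin_def by blast+
  show "f (x+y) = f x + f y" by (rule a)
  show "f (c *\<^sub>R x) = c *\<^sub>R f x" by (rule s)
  show "f 0 = 0" using s[of 0 0] by simp
  show "f (-x) = - f x" using s[of "-1" x] by simp
  show "f (x - y) = f x - f y" using a[of x "-y"] s[of "-1" y] by simp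
qed

lemma hol_iff: "X \<in> hol J \<longleftrightarrow> J (fst X) = - snd X \<and> J (snd X) = fst X"
  by (auto simp: hol_def cext_def cscale_def prod_eq_iff)

lemma antihol_iff: "X \<in> antihol J \<longleftrightarrow> J (fst X) = snd X \<and> J (snd X) = - fst X"
  by (auto simp: antihol_def cext_def cscale_def prod_eq_iff)

lemma halfhalf[simp]: "(1/2) *\<^sub>R x + (1/2) *\<^sub>R x = (x::'a::real_vector)"
  "(1/2) *\<^sub>R x + ((1/2) *\<^sub>R x + y) = x + (y::'a::real_vector)"
  by (simp_all add: scaleR_left_distrib[symmetric] add.assoc[symmetric])

lemma half_double: "(b::'a::real_vector) + b = w \<Longrightarrow> b = (1/2) *\<^sub>R w"
proof -
  assume "b + b = w"
  hence "w = 2 *\<^sub>R b" by (simp add: scaleR_2)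
  thus ?thesis by simp
qed

context
  fixes I :: "'e::real_vector \<Rightarrow> 'e"
  assumes vs: "vs_complex_structure I"
begin

lemma Ilin: "rlin I" using vs vs_complex_structure_def by auto
lemma II[simp]: "I (I v) = - v" using vs vs_complex_structure_def by auto
lemmas Isimps[simp] = rlin_simps[OF Ilin]

lemma proj_formula:
  "proj10 I W = ((1/2) *\<^sub>R (fst W + I (snd W)), (1/2) *\<^sub>R (snd W - I (fst W)))"
  unfolding proj10_def
proof (rule the_equality)
  show "((1/2) *\<^sub>R (fst W + I (snd W)), (1/2) *\<^sub>R (snd W - I (fst W))) \<in> hol I \<and>
    csub W ((1/2) *\<^sub>R (fst W + I (snd W)), (1/2) *\<^sub>R (snd W - I (fst W))) \<in> antihol I"
    by (simp add: hol_iff antihol_iff csub_def algebra_simps scaleR_left_diff_distrib[symmetric])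
next
  fix P assume h: "P \<in> hol I \<and> csub W P \<in> antihol I"
  obtain a b where P: "P = (a,b)" by fastforce
  obtain u v where W: "W = (u,v)" by fastforce
  have 1: "I a = - b" "I b = a" using h P by (auto simp: hol_iff)
  have 2: "I u - I a = v - b" using h P W by (auto simp: antihol_iff csub_def)
  hence "b + b = v - I u" using 1 by (simp add: algebra_simps)
  hence bb: "b = (1/2) *\<^sub>R (v - I u)" by (rule half_double)
  have "a = (1/2) *\<^sub>R (u + I v)" using 1(2) bb by (simp add: algebra_simps)
  thus "P = ((1/2) *\<^sub>R (fst W + I (snd W)), (1/2) *\<^sub>R (snd W - I (fst W)))"
    using P W bb by simp
qed

lemma proj_hol: "proj10 I W \<in> hol I"
  by (simp add: proj_formula hol_iff algebra_simps)

lemma proj_rest: "csub W (proj10 I W) \<in> antihol I"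
  by (simp add: proj_formula antihol_iff csub_def algebra_simps scaleR_left_diff_distrib[symmetric])

lemma proj_anti: "Q \<in> antihol I \<Longrightarrow> proj10 I Q = (0,0)"
  by (simp add: proj_formula antihol_iff)

lemma proj_add: "proj10 I (cadd A B) = cadd (proj10 I A) (proj10 I B)"
  by (simp add: proj_formula cadd_def algebra_simps)

lemma proj_sub: "proj10 I (csub A B) = csub (proj10 I A) (proj10 I B)"
  by (simp add: proj_formula csub_def algebra_simps)

lemma proj_scale: "proj10 I (cscale c A) = cscale c (proj10 I A)"
  by (simp add: proj_formula cscale_def algebra_simps)

end


lemma rep_lin1: "representation br \<rho> \<Longrightarrow> rlin (\<lambda>x. \<rho> x v)"
  by (simp add: representation_def)
lemma rep_lin2: "representation br \<rho> \<Longrightarrow> rlin (\<rho> x)"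
  by (simp add: representation_def)

lemma crho_addX:
  assumes r: "representation br \<rho>"
  shows "crho \<rho> (cadd X Y) V = cadd (crho \<rho> X V) (crho \<rho> Y V)"
  using rlin_simps(1)[OF rep_lin1[OF r]] by (simp add: crho_def cadd_def algebra_simps)

lemma crho_scaleX:
  assumes r: "representation br \<rho>"
  shows "crho \<rho> (cscale c X) V = cscale c (crho \<rho> X V)"
  by (simp add: rlin_simps(1,2,5)[OF rep_lin1[OF r], simplified] crho_def cscale_def algebra_simps)

lemma crho_addV:
  assumes r: "representation br \<rho>"
  shows "crho \<rho> X (cadd V W) = cadd (crho \<rho> X V) (crho \<rho> X W)"
  using rlin_simps(1)[OF rep_lin2[OF r]] by (simp add: crho_def cadd_def algebra_simps)

lemma crho_scaleV:
  assumes r: "representation br \<rho>"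
  shows "crho \<rho> X (cscale c V) = cscale c (crho \<rho> X V)"
  by (simp add: rlin_simps(1,2,5)[OF rep_lin2[OF r]] crho_def cscale_def algebra_simps)

lemma crho_br:
  assumes r: "representation br \<rho>"
  shows "crho \<rho> (cbr br X Y) V = csub (crho \<rho> X (crho \<rho> Y V)) (crho \<rho> Y (crho \<rho> X V))"
proof -
  have b: "\<And>x y w. \<rho> (br x y) w = \<rho> x (\<rho> y w) - \<rho> y (\<rho> x w)"
    using r by (simp add: representation_def comm_def)
  show ?thesis
    by (simp add: rlin_simps(1,5)[OF rep_lin1[OF r], simplified] rlin_simps(1,5)[OF rep_lin2[OF r]] crho_def cbr_def csub_def b algebra_simps)
qed

lemma cbr_anti:
  assumes cs: "lie_complex_structure br J" and l: "lie_algebra br"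
    and X: "X \<in> antihol J" and Y: "Y \<in> antihol J"
  shows "cbr br X Y \<in> antihol J"
proof -
  have Jl: "rlin J" and JJ: "\<And>x. J (J x) = - x"
    and N: "\<And>x y. br x y - br (J x) (J y) + J (br (J x) y) + J (br x (J y)) = 0"
    using cs by (auto simp: lie_complex_structure_def)
  obtain x x' where Xe: "X = (x,x')" by fastforce
  obtain y y' where Ye: "Y = (y,y')" by fastforce
  have xx: "J x = x'" "J x' = - x" using X Xe by (auto simp: antihol_iff)
  have yy: "J y = y'" "J y' = - y" using Y Ye by (auto simp: antihol_iff)
  have N1: "br x y - br x' y' + J (br x' y + br x y') = 0"
    using N[of x y] xx yy rlin_simps(1)[OF Jl] by (simp add: algebra_simps)
  hence s2: "J (br x y' + br x' y) = - (br x y - br x' y')"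
    by (simp add: algebra_simps eq_neg_iff_add_eq_0)
  have "J (J (br x y' + br x' y)) = J (- (br x y - br x' y'))" using s2 by simp
  hence "- (br x y' + br x' y) = - J (br x y - br x' y')"
    by (simp only: JJ rlin_simps(4)[OF Jl])
  hence s1: "J (br x y - br x' y') = br x y' + br x' y" by (metis neg_equal_iff_equal)
  show ?thesis using s1 s2 Xe Ye by (simp add: antihol_iff cbr_def)
qed

lemma crho_anti:
  assumes vs: "vs_complex_structure I" and cs: "lie_complex_structure br J"
    and r: "representation br \<rho>" and ig: "integrable_rep J \<rho> I"
    and X: "X \<in> antihol J" and Q: "Q \<in> antihol I"
  shows "crho \<rho> X Q \<in> antihol I"
proof -
  obtain x x' where Xe: "X = (x,x')" by fastforce
  obtain w w' where Qe: "Q = (w,w')" by fastforce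
  have xx: "J x = x'" using X Xe by (auto simp: antihol_iff)
  have ww: "I w = w'" "I w' = - w" using Q Qe by (auto simp: antihol_iff)
  note Is = Isimps[OF vs] II[OF vs]
  note R = rlin_simps[OF rep_lin2[OF r]]
  have "comm I (\<rho> (J x)) w' + I (comm (\<rho> x) I w') = 0"
    using ig by (simp add: integrable_rep_def)
  hence e: "I (\<rho> x' w') + \<rho> x' w - I (\<rho> x w) + \<rho> x w' = 0"
    using xx ww by (simp add: comm_def Is R algebra_simps)
  have f1: "I (\<rho> x w - \<rho> x' w') = \<rho> x w' + \<rho> x' w"
    using e by (simp add: Is algebra_simps eq_neg_iff_add_eq_0 diff_eq_eq)
  hence "I (I (\<rho> x w - \<rho> x' w')) = I (\<rho> x w' + \<rho> x' w)" by simp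
  hence f2: "I (\<rho> x w' + \<rho> x' w) = - (\<rho> x w - \<rho> x' w')" using Is by simp
  show ?thesis using f1 f2 Xe Qe by (simp add: antihol_iff crho_def)
qed

theorem mainTheorem3:
  fixes br :: "'g::real_vector \<Rightarrow> 'g \<Rightarrow> 'g"
    and J :: "'g \<Rightarrow> 'g"
    and \<rho> :: "'g \<Rightarrow> 'e::real_vector \<Rightarrow> 'e"
    and I :: "'e \<Rightarrow> 'e"
  assumes "lie_algebra br"
    and "lie_complex_structure br J"
    and "vs_complex_structure I"
    and "representation br \<rho>"
    and "integrable_rep J \<rho> I"
  defines "\<delta> \<equiv> (\<lambda>X V. proj10 I (crho \<rho> X V))"
  shows "(\<forall>X\<in>antihol J. \<forall>Y\<in>antihol J. cbr br X Y \<in> antihol J)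
    \<and> (\<forall>X\<in>antihol J. \<forall>V\<in>hol I. \<delta> X V \<in> hol I)
    \<and> (\<forall>X\<in>antihol J. \<forall>Y\<in>antihol J. \<forall>V\<in>hol I. \<delta> (cadd X Y) V = cadd (\<delta> X V) (\<delta> Y V))
    \<and> (\<forall>X\<in>antihol J. \<forall>V\<in>hol I. \<forall>c. \<delta> (cscale c X) V = cscale c (\<delta> X V))
    \<and> (\<forall>X\<in>antihol J. \<forall>V\<in>hol I. \<forall>W\<in>hol I. \<delta> X (cadd V W) = cadd (\<delta> X V) (\<delta> X W))
    \<and> (\<forall>X\<in>antihol J. \<forall>V\<in>hol I. \<forall>c. \<delta> X (cscale c V) = cscale c (\<delta> X V))
    \<and> (\<forall>X\<in>antihol J. \<forall>Y\<in>antihol J. \<forall>V\<in>hol I.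
         \<delta> (cbr br X Y) V = csub (\<delta> X (\<delta> Y V)) (\<delta> Y (\<delta> X V)))"
  proof -
  note vs = assms(3) and r = assms(4) and cs = assms(2) and l = assms(1) and ig = assms(5)
  have P7: "\<delta> (cbr br X Y) V = csub (\<delta> X (\<delta> Y V)) (\<delta> Y (\<delta> X V))"
    if X: "X \<in> antihol J" and Y: "Y \<in> antihol J" for X Y V
  proof -
    have key: "\<delta> A (\<delta> B V) = proj10 I (crho \<rho> A (crho \<rho> B V))"
      if A: "A \<in> antihol J" for A B
    proof -
      define R where "R = crho \<rho> B V"
      have RR: "R = cadd (proj10 I R) (csub R (proj10 I R))"
        by (simp add: cadd_def csub_def)
      have "proj10 I (crho \<rho> A R) = cadd (proj10 I (crho \<rho> A (proj10 I R)))
           (proj10 I (crho \<rho> A (csub R (proj10 I R))))"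
        by (subst RR) (simp only: crho_addV[OF r] proj_add[OF vs])
      also have "proj10 I (crho \<rho> A (csub R (proj10 I R))) = (0,0)"
        by (rule proj_anti[OF vs crho_anti[OF vs cs r ig A proj_rest[OF vs]]])
      finally show ?thesis unfolding \<delta>_def R_def by (simp add: cadd_def)
    qed
    show ?thesis using key[OF X] key[OF Y]
      by (simp add: \<delta>_def crho_br[OF r] proj_sub[OF vs])
  qed
  show ?thesis
    using cbr_anti[OF cs l] P7
    by (simp add: \<delta>_def proj_hol[OF vs] crho_addX[OF r] crho_scaleX[OF r] crho_addV[OF r]
        crho_scaleV[OF r] proj_add[OF vs] proj_scale[OF vs])
qed

end
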